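(* Let $A_2$ be the hexagonal lattice in $\mathbb{R}^2\cong\mathbb{C}$, i.e. the lattice $\mathbb{Z}+\mathbb{Z}\frac{1+\sqrt{-3}}{2}$ (the ring of integers of $\mathbb{Q}(\sqrt{-3})$). For every $m>0$ such that the shell $(A_2)_m=\{x\in A_2 : (x,x)=m\}$ is nonempty, the shell $(A_2)_m$ is not a spherical $6$-design.
   Context: $(x,y)$ denotes the standard Euclidean inner product on $\mathbb{R}^2\cong\mathbb{C}$, so $(x,x)=|x|^2$. A finite nonempty set $X\subset S^{n-1}$ is a spherical $t$-design if $\frac{1}{|X|}\sum_{x\in X}f(x)=\frac{1}{|S^{n-1}|}\int_{S^{n-1}}f\,d\sigma$ for all polynomials $f$ of degree at most $t$; a finite nonempty subset $X$ of the sphere of radius $r$ is a spherical $t$-design if $\frac{1}{r}X$ is one. (For $n=2$, a finite set $\{\xi_1,\dots,\xi_N\}$ on the unit circle in $\mathbb{C}$ is a spherical $t$-design iff $\sum_i\xi_i^k=0$ for $k=1,\dots,t$.) *)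

theory Defs
  imports "HOL-Analysis.Analysis"
begin

definition poly2_deg_le :: "nat \<Rightarrow> (real \<Rightarrow> real \<Rightarrow> real) \<Rightarrow> bool" where
  "poly2_deg_le t f \<longleftrightarrow>
     (\<exists>c :: nat \<Rightarrow> nat \<Rightarrow> real. \<forall>x y.
        f x y = (\<Sum>(i, j) \<in> {(i, j). i + j \<le> t}. c i j * x ^ i * y ^ j))"

definition circle_design :: "nat \<Rightarrow> complex set \<Rightarrow> bool" where
  "circle_design t X \<longleftrightarrow>
     finite X \<and> X \<noteq> {} \<and> X \<subseteq> sphere 0 1 \<and>
     (\<forall>f. poly2_deg_le t f \<longrightarrow>
        (\<Sum>x\<in>X. f (Re x) (Im x)) / real (card X)
          = integral {0..2*pi} (\<lambda>\<theta>. f (cos \<theta>) (sin \<theta>)) / (2*pi))"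

definition circle_design_r :: "real \<Rightarrow> nat \<Rightarrow> complex set \<Rightarrow> bool" where
  "circle_design_r r t X \<longleftrightarrow>
     r > 0 \<and> X \<subseteq> sphere 0 r \<and> circle_design t ((\<lambda>x. x / complex_of_real r) ` X)"

definition A2 :: "complex set" where
  "A2 = {of_int a + of_int b * ((1 + \<i> * complex_of_real (sqrt 3)) / 2) | a b :: int. True}"

definition A2_shell :: "real \<Rightarrow> complex set" where
  "A2_shell m = {x \<in> A2. (cmod x)\<^sup>2 = m}"

end

theory Submission
  imports Defs "HOL-Computational_Algebra.Primes"
begin

definition w :: complex where "w = (1 + \<i> * complex_of_real (sqrt 3)) / 2"
definition eis :: "int \<Rightarrow> int \<Rightarrow> complex" where "eis a b = of_int a + of_int b * w"

lemma Re_w[simp]: "Re w = 1/2" and Im_w[simp]: "Im w = sqrt 3 / 2"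
  by (simp_all add: w_def)

lemma Re_eis[simp]: "Re (eis a b) = a + b/2" and Im_eis[simp]: "Im (eis a b) = b * sqrt 3 / 2"
  by (simp_all add: eis_def)

lemma w_sq: "w * w = w - 1"
  by (simp add: complex_eq_iff w_def field_simps)

lemma A2_eis: "A2 = {eis a b | a b. True}"
  by (simp add: A2_def eis_def w_def)

lemma in_A2: "x \<in> A2 \<longleftrightarrow> (\<exists>a b. x = eis a b)"
  by (auto simp: A2_eis)

lemma eis_in[simp]: "eis a b \<in> A2" by (auto simp: in_A2)

lemma eis_inj[simp]: "eis a b = eis c d \<longleftrightarrow> a = c \<and> b = d"
proof
  assume h: "eis a b = eis c d"
  hence "Im (eis a b) = Im (eis c d)" by simp
  hence bd: "b = d" by simp
  from h have "Re (eis a b) = Re (eis c d)" by simp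
  with bd show "a = c \<and> b = d" by simp
qed simp

lemma eis_mult: "eis a b * eis c d = eis (a*c - b*d) (a*d + b*c + b*d)"
proof -
  have "eis a b * eis c d = of_int (a*c) + of_int (a*d + b*c) * w + of_int (b*d) * (w*w)"
    by (simp add: eis_def algebra_simps)
  also have "\<dots> = eis (a*c - b*d) (a*d + b*c + b*d)"
    by (simp add: w_sq eis_def algebra_simps)
  finally show ?thesis .
qed

lemma eis_add: "eis a b + eis c d = eis (a+c) (b+d)" by (simp add: eis_def algebra_simps)
lemma eis_diff: "eis a b - eis c d = eis (a-c) (b-d)" by (simp add: eis_def algebra_simps)
lemma eis_0: "eis 0 0 = 0" by (simp add: eis_def)
lemma eis_1: "eis 1 0 = 1" by (simp add: eis_def)
lemma eis_of_int: "eis a 0 = of_int a" by (simp add: eis_def)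
lemma cnj_eis: "cnj (eis a b) = eis (a+b) (-b)"
  by (simp add: complex_eq_iff)

lemma norm_sq_real: "(cmod (of_real s + of_real t * w))^2 = s^2 + s*t + t^2"
  unfolding cmod_power2 by (simp add: power2_eq_square field_simps)

lemma norm_eis: "(cmod (eis a b))^2 = of_int (a^2 + a*b + b^2)"
  using norm_sq_real[of "of_int a" "of_int b"] by (simp add: eis_def)

lemma A2_mult: "x \<in> A2 \<Longrightarrow> y \<in> A2 \<Longrightarrow> x * y \<in> A2"
  by (auto simp: in_A2 eis_mult)
lemma A2_diff: "x \<in> A2 \<Longrightarrow> y \<in> A2 \<Longrightarrow> x - y \<in> A2"
  by (auto simp: in_A2 eis_diff)
lemma A2_add: "x \<in> A2 \<Longrightarrow> y \<in> A2 \<Longrightarrow> x + y \<in> A2"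
  by (auto simp: in_A2 eis_add)
lemma A2_cnj: "x \<in> A2 \<Longrightarrow> cnj x \<in> A2"
  by (auto simp: in_A2 cnj_eis)
lemma A2_of_int: "of_int a \<in> A2"
  by (metis eis_in eis_of_int)
lemma A2_of_nat: "of_nat a \<in> A2"
  using A2_of_int[of "int a"] by simp

lemma norm_nonneg_int: "a^2 + a*b + b^2 \<ge> (0::int)"
proof -
  have h: "4*(a^2 + a*b + b^2) = (2*a+b)^2 + 3*b^2" by algebra
  have "0 \<le> 4*(a^2 + a*b + b^2)" unfolding h by simp
  thus ?thesis by (simp only: zero_le_mult_iff) simp
qed

lemma A2_norm_nat: "x \<in> A2 \<Longrightarrow> \<exists>k::nat. (cmod x)^2 = real k"
proof -
  assume "x \<in> A2"
  then obtain a b where x: "x = eis a b" by (auto simp: in_A2)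
  have "(cmod x)^2 = real (nat (a^2 + a*b + b^2))"
    using norm_eis[of a b] norm_nonneg_int[of a b] x by simp
  thus ?thesis by blast
qed

definition edvd :: "complex \<Rightarrow> complex \<Rightarrow> bool" where
  "edvd y x \<longleftrightarrow> (\<exists>z\<in>A2. x = y*z)"

lemma small_norm: fixes s t :: real
  assumes "\<bar>s\<bar> \<le> 1/2" "\<bar>t\<bar> \<le> 1/2" shows "s^2 + s*t + t^2 < 1"
proof -
  have "\<bar>s\<bar>^2 \<le> (1/2)^2" by (rule power_mono[OF assms(1)]) simp
  hence a: "s^2 \<le> 1/4" by (simp add: power2_abs power_divide)
  have "\<bar>t\<bar>^2 \<le> (1/2)^2" by (rule power_mono[OF assms(2)]) simp
  hence b: "t^2 \<le> 1/4" by (simp add: power2_abs power_divide)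
  have "\<bar>s\<bar>*\<bar>t\<bar> \<le> (1/2)*(1/2)" by (rule mult_mono[OF assms]) simp_all
  hence c: "\<bar>s*t\<bar> \<le> 1/4" by (simp add: abs_mult)
  have "s*t \<le> \<bar>s*t\<bar>" by (rule abs_ge_self)
  with a b c show ?thesis by linarith
qed

lemma euclid:
  assumes "\<alpha> \<in> A2" "\<beta> \<in> A2" "\<beta> \<noteq> 0"
  shows "\<exists>q\<in>A2. cmod (\<alpha> - q*\<beta>) < cmod \<beta>"
proof -
  have "\<alpha> * cnj \<beta> \<in> A2" using assms by (simp add: A2_mult A2_cnj)
  then obtain u v where uv: "\<alpha> * cnj \<beta> = eis u v" by (auto simp: in_A2)
  define r where "r = (cmod \<beta>)^2"
  have rpos: "r > 0" using assms(3) by (simp add: r_def)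
  have bb: "\<beta> * cnj \<beta> = of_real r" unfolding r_def by (rule complex_norm_square[symmetric])
  have q1: "\<alpha> / \<beta> = of_real (u/r) + of_real (v/r) * w"
  proof -
    have "\<alpha> / \<beta> = \<alpha> * cnj \<beta> / (\<beta> * cnj \<beta>)" using assms(3) by (simp add: field_simps)
    also have "\<dots> = eis u v / of_real r" by (simp add: uv bb)
    also have "\<dots> = of_real (u/r) + of_real (v/r) * w"
      using rpos by (simp add: eis_def field_simps)
    finally show ?thesis .
  qed
  define q where "q = eis (round (u/r)) (round (v/r))"
  define s where "s = u/r - of_int (round (u/r))"
  define t where "t = v/r - of_int (round (v/r))"
  have "\<alpha>/\<beta> - q = of_real s + of_real t * w"
    by (simp add: q1 q_def s_def t_def eis_def algebra_simps)
  hence "(cmod (\<alpha>/\<beta> - q))^2 < 1"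
    using norm_sq_real[of s t] small_norm[of s t] of_int_round_abs_le[of "u/r"] of_int_round_abs_le[of "v/r"]
    by (simp add: s_def t_def abs_minus_commute)
  hence lt: "cmod (\<alpha>/\<beta> - q) < 1"
    by (metis abs_norm_cancel abs_square_less_1)
  have "\<alpha> - q*\<beta> = \<beta> * (\<alpha>/\<beta> - q)" using assms(3) by (simp add: field_simps)
  hence "cmod (\<alpha> - q*\<beta>) = cmod \<beta> * cmod (\<alpha>/\<beta> - q)" by (simp add: norm_mult)
  also have "\<dots> < cmod \<beta>" using lt assms(3) by simp
  finally show ?thesis using q_def by auto
qed

definition S :: "nat \<Rightarrow> complex set" where "S n = A2_shell (real n)"
definition T :: "nat \<Rightarrow> complex" where "T n = (\<Sum>x\<in>S n. x^6)"

lemma in_S: "x \<in> S n \<longleftrightarrow> x \<in> A2 \<and> (cmod x)^2 = real n"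
  by (simp add: S_def A2_shell_def)

lemma int_abs_le_sq: "\<bar>b::int\<bar> \<le> b^2"
proof (cases "b = 0")
  case False
  hence "\<bar>b\<bar> * 1 \<le> \<bar>b\<bar> * \<bar>b\<bar>" by (intro mult_left_mono) auto
  thus ?thesis by (simp add: power2_eq_square abs_mult[symmetric])
qed simp

lemma finite_S: "finite (S n)"
proof -
  have "S n \<subseteq> (\<lambda>(a,b). eis a b) ` ({-4*int n..4*int n} \<times> {-4*int n..4*int n})"
  proof
    fix x assume xS: "x \<in> S n"
    then obtain a b where x: "x = eis a b" by (auto simp: in_S in_A2)
    have "real_of_int (a^2 + a*b + b^2) = real_of_int (int n)"
      using xS norm_eis[of a b] x by (simp add: in_S)
    hence nn: "a^2 + a*b + b^2 = int n" by (simp only: of_int_eq_iff)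
    define N where "N = a^2 + a*b + b^2"
    define P where "P = (2*a+b)^2"
    define Q where "Q = b^2"
    have h: "4*N = P + 3*Q" unfolding N_def P_def Q_def by algebra
    have P0: "P \<ge> 0" "Q \<ge> 0" unfolding P_def Q_def by simp_all
    have "\<bar>b\<bar> \<le> Q" "\<bar>2*a+b\<bar> \<le> P" unfolding P_def Q_def by (rule int_abs_le_sq)+
    hence "\<bar>b\<bar> \<le> 4 * int n" "\<bar>2*a+b\<bar> \<le> 4 * int n" using h P0 nn N_def by linarith+
    hence "\<bar>a\<bar> \<le> 4 * int n" "\<bar>b\<bar> \<le> 4 * int n" by linarith+
    thus "x \<in> (\<lambda>(a,b). eis a b) ` ({-4*int n..4*int n} \<times> {-4*int n..4*int n})"
      using x by (auto intro!: image_eqI[of _ _ "(a,b)"])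
  qed
  thus ?thesis by (rule finite_subset) auto
qed

lemma scale:
  assumes c: "c \<in> A2" "c \<noteq> 0" "(cmod c)^2 = real k" "k dvd n"
    and all: "\<forall>x\<in>S n. edvd c x"
  shows "S n = (\<lambda>y. c*y) ` S (n div k)" "T n = c^6 * T (n div k)"
proof -
  have "(cmod c)^2 > 0" using c(2) by simp
  hence k0: "real k > 0" using c(3) by simp
  have nk: "real n = real k * real (n div k)" using c(4) by (metis dvd_mult_div_cancel of_nat_mult)
  show SS: "S n = (\<lambda>y. c*y) ` S (n div k)"
  proof
    show "S n \<subseteq> (\<lambda>y. c*y) ` S (n div k)"
    proof
      fix x assume x: "x \<in> S n"
      then obtain z where z: "z \<in> A2" "x = c*z" using all by (auto simp: edvd_def)
      have "real k * (cmod z)^2 = real k * real (n div k)" using x z c nk by (simp add: in_S norm_mult power_mult_distrib)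
      hence "(cmod z)^2 = real (n div k)" using k0 by simp
      thus "x \<in> (\<lambda>y. c*y) ` S (n div k)" using z by (auto simp: in_S)
    qed
  next
    show "(\<lambda>y. c*y) ` S (n div k) \<subseteq> S n"
    proof
      fix x assume "x \<in> (\<lambda>y. c*y) ` S (n div k)"
      then obtain y where y: "y \<in> S (n div k)" "x = c*y" by auto
      have "(cmod x)^2 = real n" using y c nk by (simp add: in_S norm_mult power_mult_distrib)
      thus "x \<in> S n" using y c A2_mult by (auto simp: in_S)
    qed
  qed
  have inj: "inj_on (\<lambda>y. c*y) (S (n div k))" using c(2) by (auto simp: inj_on_def)
  have "T n = (\<Sum>y\<in>S (n div k). (c*y)^6)" unfolding T_def SS by (simp add: sum.reindex[OF inj])
  also have "\<dots> = c^6 * T (n div k)" by (simp add: T_def sum_distrib_left power_mult_distrib)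
  finally show "T n = c^6 * T (n div k)" .
qed

locale splitp =
  fixes p sr :: int
  assumes p_prime: "prime p" and p3: "p \<noteq> 3" and ps: "p dvd sr^2 - sr + 1"
begin

definition inK :: "complex \<Rightarrow> bool" where
  "inK z \<longleftrightarrow> (\<exists>u v. z = eis u v \<and> p dvd u + v * sr)"

lemma inK_eis[simp]: "inK (eis c d) \<longleftrightarrow> p dvd c + d * sr"
  by (auto simp: inK_def)

lemma inK_A2: "inK z \<Longrightarrow> z \<in> A2" by (auto simp: inK_def)

lemma inK_mult: assumes "x \<in> A2" "y \<in> A2" shows "inK (x*y) \<longleftrightarrow> inK x \<or> inK y"
proof -
  obtain c d e f where x: "x = eis c d" and y: "y = eis e f" using assms by (auto simp: in_A2)
  have id: "(c*e - d*f) + (c*f + d*e + d*f) * sr = (c+d * sr)*(e+f * sr) - d*f*(sr^2 - sr + 1)"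
    by (simp add: algebra_simps power2_eq_square)
  have "p dvd (c*e - d*f) + (c*f + d*e + d*f) * sr \<longleftrightarrow> p dvd (c+d * sr)*(e+f * sr)"
    unfolding id using ps by (metis dvd_diff dvd_mult diff_add_cancel dvd_add)
  also have "\<dots> \<longleftrightarrow> p dvd c+d * sr \<or> p dvd e+f * sr" using p_prime by (simp add: prime_dvd_mult_iff)
  finally show ?thesis by (simp add: x y eis_mult)
qed

lemma inK_diff: assumes "inK x" "inK y" shows "inK (x - y)"
proof -
  obtain u v u' v' where x: "x = eis u v" "p dvd u + v * sr" and y: "y = eis u' v'" "p dvd u' + v' * sr"
    using assms by (auto simp: inK_def)
  have "(u - u') + (v - v') * sr = (u + v * sr) - (u' + v' * sr)" by (simp add: algebra_simps)
  hence "p dvd (u - u') + (v - v') * sr" using dvd_diff[OF x(2) y(2)] by metis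
  thus ?thesis by (simp add: x y eis_diff)
qed

lemma inK_p: "inK (of_int p)"
  by (metis eis_of_int inK_eis dvd_refl mult_zero_left add_0_right)

lemma not_inK_1: "\<not> inK 1"
proof
  assume "inK 1" hence "p dvd 1" by (metis eis_1 inK_eis mult_zero_left add_0_right)
  thus False using p_prime by (simp add: prime_int_iff)
qed

lemma inK_ws: "inK (eis (-sr) 1)" by simp

lemma p_gt1: "p > 1" using p_prime prime_gt_1_int by blast

lemma exists_pi: "\<exists>\<pi>. inK \<pi> \<and> \<pi> \<noteq> 0 \<and> (\<forall>z\<in>A2. edvd \<pi> z \<longleftrightarrow> inK z)"
proof -
  define P where "P k \<longleftrightarrow> (\<exists>z. inK z \<and> z \<noteq> 0 \<and> (cmod z)^2 = real k)" for k :: nat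
  have "P (nat (p^2))"
    unfolding P_def using inK_p p_gt1 by (intro exI[of _ "of_int p"]) (simp add: norm_power[symmetric])
  hence PL: "P (LEAST k. P k)" by (rule LeastI)
  then obtain \<pi> where pi: "inK \<pi>" "\<pi> \<noteq> 0" "(cmod \<pi>)^2 = real (LEAST k. P k)" by (auto simp: P_def)
  have "edvd \<pi> z" if z: "inK z" for z
  proof -
    obtain q where q: "q \<in> A2" "cmod (z - q*\<pi>) < cmod \<pi>"
      using euclid[OF inK_A2[OF z] inK_A2[OF pi(1)] pi(2)] by blast
    have r: "inK (z - q*\<pi>)" using inK_diff[OF z] inK_mult[OF q(1) inK_A2[OF pi(1)]] pi(1) by blast
    have "z - q*\<pi> = 0"
    proof (rule ccontr)
      assume nz: "z - q*\<pi> \<noteq> 0"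
      obtain j where j: "(cmod (z - q*\<pi>))^2 = real j" using A2_norm_nat[OF inK_A2[OF r]] by blast
      have "P j" using r nz j by (auto simp: P_def)
      hence "(LEAST k. P k) \<le> j" by (rule Least_le)
      moreover have "(cmod (z - q*\<pi>))^2 < (cmod \<pi>)^2" using q(2) by (simp add: power_strict_mono)
      ultimately show False using j pi(3) by linarith
    qed
    thus ?thesis using q(1) by (auto simp: edvd_def intro!: bexI[of _ q])
  qed
  moreover have "inK z" if "z \<in> A2" "edvd \<pi> z" for z
    using that pi(1) inK_mult inK_A2 by (auto simp: edvd_def)
  ultimately show ?thesis using pi by blast
qed

lemma norm_pi:
  assumes pi: "inK \<pi>" "\<pi> \<noteq> 0" "\<forall>z\<in>A2. edvd \<pi> z \<longleftrightarrow> inK z"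
  shows "(cmod \<pi>)^2 = real_of_int p"
proof -
  define P where "P = nat p"
  have peq: "p = int P" using p_gt1 by (simp add: P_def)
  have P: "prime P" using p_prime prime_int_nat_transfer unfolding P_def by blast
  have piA: "\<pi> \<in> A2" using inK_A2 pi(1) .
  have "edvd \<pi> (of_int p)" using pi(3) inK_p A2_of_int by blast
  then obtain w where w: "w \<in> A2" "of_int p = \<pi> * w" by (auto simp: edvd_def)
  obtain k where k: "(cmod \<pi>)^2 = real k" using A2_norm_nat[OF piA] by blast
  obtain j where j: "(cmod w)^2 = real j" using A2_norm_nat[OF w(1)] by blast
  have pw: "\<pi> * w = of_nat P" using w(2) peq by simp
  have "real (k*j) = (cmod (\<pi> * w))^2" by (simp add: k j norm_mult power_mult_distrib)
  also have "\<dots> = real (P^2)" using pw by simp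
  finally have kj: "k * j = P^2" by (simp only: of_nat_eq_iff)
  hence "k dvd P^2" unfolding kj[symmetric] by simp
  then obtain i where i: "i \<le> 2" "k = P^i" using divides_primepow_nat[OF P] by blast
  have "i = 1"
  proof (rule ccontr)
    assume "i \<noteq> 1"
    hence "i = 0 \<or> i = 2" using i by auto
    thus False
    proof
      assume "i = 0"
      hence "(cmod \<pi>)^2 = 1" using i k by simp
      hence "\<pi> * cnj \<pi> = 1" using complex_norm_square[of \<pi>] by simp
      moreover have "inK (\<pi> * cnj \<pi>)" using inK_mult[OF piA A2_cnj[OF piA]] pi(1) by blast
      ultimately show False using not_inK_1 by simp
    next
      assume "i = 2"
      hence "P^2 * j = P^2 * 1" using kj i by simp
      moreover have "P^2 > 0" using P prime_gt_0_nat by simp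
      ultimately have "j = 1" by (subst (asm) mult_left_cancel) auto
      hence "w * cnj w = 1" using j complex_norm_square[of w] by simp
      have "of_int p * cnj w = \<pi> * (w * cnj w)" using w(2) by (simp add: mult.assoc)
      hence pw: "\<pi> = of_int p * cnj w" using \<open>w * cnj w = 1\<close> by simp
      have "edvd \<pi> (eis (-sr) 1)" using pi(3) inK_ws eis_in by blast
      then obtain v where v: "v \<in> A2" "eis (-sr) 1 = \<pi> * v" by (auto simp: edvd_def)
      have "cnj w * v \<in> A2" using A2_mult A2_cnj w(1) v(1) by blast
      then obtain e f where ef: "cnj w * v = eis e f" by (auto simp: in_A2)
      have "eis (-sr) 1 = eis p 0 * eis e f" using v(2) pw ef by (simp add: eis_of_int mult.assoc)
      hence "1 = p * f" by (simp add: eis_mult)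
      moreover have "p dvd p * f" by simp
      ultimately have "p dvd 1" by simp
      thus False using p_gt1 by (simp add: zdvd1_eq)
    qed
  qed
  thus ?thesis using k i peq by simp
qed

lemma cnj_pi_notK:
  assumes pi: "inK \<pi>" "(cmod \<pi>)^2 = real_of_int p"
  shows "\<not> inK (cnj \<pi>)"
proof
  assume cK: "inK (cnj \<pi>)"
  obtain c d where cd: "\<pi> = eis c d" "p dvd c + d * sr" using pi(1) by (auto simp: inK_def)
  have h2: "p dvd (c + d) + (-d) * sr" using cK cd by (simp add: cnj_eis)
  have e1: "2*c + d = (c + d * sr) + ((c + d) + (-d) * sr)" by (simp add: algebra_simps)
  have "p dvd (c + d * sr) + ((c + d) + (-d) * sr)" using cd(2) h2 by (rule dvd_add)
  hence h3: "p dvd 2*c + d" unfolding e1[symmetric] .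
  have "real_of_int (c^2 + c*d + d^2) = real_of_int p" using pi(2) norm_eis[of c d] cd(1) by simp
  hence N: "c^2 + c*d + d^2 = p" by (simp only: of_int_eq_iff)
  have e2: "3*d^2 = 4*(c^2 + c*d + d^2) - (2*c+d)^2" by algebra
  have "p dvd 4*(c^2 + c*d + d^2)" unfolding N by simp
  moreover have "p dvd (2*c+d)^2" using h3 by (simp add: power2_eq_square)
  ultimately have "p dvd 4*(c^2 + c*d + d^2) - (2*c+d)^2" by (rule dvd_diff)
  hence "p dvd 3*d^2" unfolding e2[symmetric] .
  hence "p dvd 3 \<or> p dvd d^2" using p_prime by (simp add: prime_dvd_mult_iff)
  hence "p dvd 3 \<or> p dvd d" using p_prime prime_dvd_power by blast
  thus False
  proof
    assume "p dvd 3"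
    moreover have "p \<le> 3" using \<open>p dvd 3\<close> by (rule zdvd_imp_le) simp
    moreover have "p \<noteq> 2" using \<open>p dvd 3\<close> by auto
    ultimately have "p = 3" using p_gt1 by linarith
    thus False using p3 by simp
  next
    assume pd: "p dvd d"
    have e3: "c = (c + d * sr) - d * sr" by simp
    have "p dvd (c + d * sr) - d * sr" using cd(2) pd by (intro dvd_diff) auto
    hence pc: "p dvd c" unfolding e3[symmetric] .
    have "p^2 dvd c^2" "p^2 dvd c*d" "p^2 dvd d^2" using pc pd
      by (auto simp: power2_eq_square intro: mult_dvd_mono)
    hence "p^2 dvd c^2 + c*d + d^2" by (intro dvd_add) auto
    hence "p * p dvd p * 1" using N by (simp add: power2_eq_square)
    hence "p dvd 1" using p_gt1 by (subst (asm) dvd_mult_cancel_left) auto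
    thus False using p_gt1 by (simp add: zdvd1_eq)
  qed
qed

end

locale piprime =
  fixes \<pi> :: complex and p :: nat
  assumes piA: "\<pi> \<in> A2" and pnorm: "(cmod \<pi>)^2 = real p" and pp: "prime p"
    and piprime: "\<And>x y. x \<in> A2 \<Longrightarrow> y \<in> A2 \<Longrightarrow> edvd \<pi> (x*y) \<Longrightarrow> edvd \<pi> x \<or> edvd \<pi> y"
    and notcnj: "\<not> edvd \<pi> (cnj \<pi>)"
begin

lemma A2_pow: "x \<in> A2 \<Longrightarrow> x^n \<in> A2"
  by (induction n) (auto intro: A2_mult simp: eis_1[symmetric])

lemma p0: "p > 0" using pp prime_gt_0_nat by blast

lemma pi0: "\<pi> \<noteq> 0" using pnorm p0 by auto

lemma pcnj: "\<pi> * cnj \<pi> = of_nat p"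
  using complex_norm_square[of \<pi>] pnorm by simp

lemma edvd_mult: "edvd \<pi> x \<Longrightarrow> y \<in> A2 \<Longrightarrow> edvd \<pi> (x*y)"
  by (auto simp: edvd_def mult.assoc intro: A2_mult)

lemma edvd_self_mult: "y \<in> A2 \<Longrightarrow> edvd \<pi> (\<pi>*y)"
  by (auto simp: edvd_def)

lemma edvd_pow: "x \<in> A2 \<Longrightarrow> edvd \<pi> (x^n) \<Longrightarrow> edvd \<pi> x"
proof (induction n)
  case 0
  hence "edvd \<pi> 1" by simp
  hence "edvd \<pi> (1 * x)" using edvd_mult 0 by blast
  thus ?case by simp
next
  case (Suc n)
  have "x^n \<in> A2" using Suc(2) by (rule A2_pow)
  thus ?case using Suc piprime[of x "x^n"] by auto
qed

definition U :: "nat \<Rightarrow> complex set" where "U n = {x \<in> S n. \<not> edvd \<pi> x}"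

lemma finite_U: "finite (U n)" using finite_S[of n] by (simp add: U_def)

lemma norm_mult_sq: "(cmod (a*b))^2 = (cmod a)^2 * (cmod b)^2"
  by (simp add: norm_mult power_mult_distrib)

lemma d1: assumes "p dvd n"
  shows "S n = U n \<union> (\<lambda>y. \<pi>*y) ` S (n div p)" "U n \<inter> (\<lambda>y. \<pi>*y) ` S (n div p) = {}"
proof -
  have nk: "real n = real p * real (n div p)" using assms by (metis dvd_mult_div_cancel of_nat_mult)
  have sub: "(\<lambda>y. \<pi>*y) ` S (n div p) \<subseteq> S n"
  proof
    fix x assume "x \<in> (\<lambda>y. \<pi>*y) ` S (n div p)"
    then obtain y where y: "y \<in> S (n div p)" "x = \<pi>*y" by auto
    have "(cmod x)^2 = real n" using y nk by (simp add: in_S norm_mult_sq pnorm)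
    thus "x \<in> S n" using y piA A2_mult by (auto simp: in_S)
  qed
  have "S n \<subseteq> U n \<union> (\<lambda>y. \<pi>*y) ` S (n div p)"
  proof
    fix x assume x: "x \<in> S n"
    show "x \<in> U n \<union> (\<lambda>y. \<pi>*y) ` S (n div p)"
    proof (cases "edvd \<pi> x")
      case True
      then obtain z where z: "z \<in> A2" "x = \<pi>*z" by (auto simp: edvd_def)
      have "real p * (cmod z)^2 = real p * real (n div p)" using x z nk by (simp add: in_S norm_mult_sq pnorm)
      hence "(cmod z)^2 = real (n div p)" using p0 by simp
      thus ?thesis using z by (auto simp: in_S)
    qed (use x in \<open>auto simp: U_def\<close>)
  qed
  thus "S n = U n \<union> (\<lambda>y. \<pi>*y) ` S (n div p)" using sub by (auto simp: U_def)
  show "U n \<inter> (\<lambda>y. \<pi>*y) ` S (n div p) = {}"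
    by (auto simp: U_def in_S edvd_self_mult)
qed

lemma d2: assumes "p dvd n"
  shows "U n = (\<lambda>y. cnj \<pi> * y) ` U (n div p)"
proof -
  have nk: "real n = real p * real (n div p)" using assms by (metis dvd_mult_div_cancel of_nat_mult)
  have cA: "cnj \<pi> \<in> A2" using A2_cnj piA .
  show ?thesis
  proof
    show "U n \<subseteq> (\<lambda>y. cnj \<pi> * y) ` U (n div p)"
    proof
      fix x assume x: "x \<in> U n"
      hence xA: "x \<in> A2" and nd: "\<not> edvd \<pi> x" and xn: "(cmod x)^2 = real n" by (auto simp: U_def in_S)
      have "x * cnj x = of_nat n" using complex_norm_square[of x] xn by simp
      also have "\<dots> = \<pi> * (cnj \<pi> * of_nat (n div p))" using nk pcnj
        by (metis mult.assoc of_nat_mult of_real_of_nat_eq of_nat_eq_of_nat_power_cancel_iff dvd_mult_div_cancel assms)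
      finally have "edvd \<pi> (x * cnj x)" using cA A2_of_nat A2_mult by (auto simp: edvd_def)
      hence "edvd \<pi> (cnj x)" using piprime[OF xA A2_cnj[OF xA]] nd by blast
      then obtain y where y: "y \<in> A2" "cnj x = \<pi> * y" by (auto simp: edvd_def)
      have xy: "x = cnj \<pi> * cnj y" using y(2) by (metis complex_cnj_cnj complex_cnj_mult)
      have "real p * (cmod (cnj y))^2 = real p * real (n div p)" using xn xy nk by (simp add: norm_mult_sq pnorm)
      hence ny: "(cmod (cnj y))^2 = real (n div p)" using p0 by simp
      have "\<not> edvd \<pi> (cnj y)"
      proof
        assume "edvd \<pi> (cnj y)"
        then obtain z where z: "z \<in> A2" "cnj y = \<pi> * z" by (auto simp: edvd_def)
        have "x = \<pi> * (cnj \<pi> * z)" using xy z by (simp add: mult.assoc mult.left_commute)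
        hence "edvd \<pi> x" using cA z(1) A2_mult by (auto simp: edvd_def)
        thus False using nd by simp
      qed
      thus "x \<in> (\<lambda>y. cnj \<pi> * y) ` U (n div p)" using xy ny A2_cnj[OF y(1)]
        by (auto simp: U_def in_S)
    qed
  next
    show "(\<lambda>y. cnj \<pi> * y) ` U (n div p) \<subseteq> U n"
    proof
      fix x assume "x \<in> (\<lambda>y. cnj \<pi> * y) ` U (n div p)"
      then obtain y where y: "y \<in> U (n div p)" "x = cnj \<pi> * y" by auto
      have yA: "y \<in> A2" and nd: "\<not> edvd \<pi> y" and yn: "(cmod y)^2 = real (n div p)" using y by (auto simp: U_def in_S)
      have "(cmod x)^2 = real n" using y(2) yn nk by (simp add: norm_mult_sq pnorm)
      moreover have "\<not> edvd \<pi> x" using piprime[OF cA yA] y(2) nd notcnj by blast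
      ultimately show "x \<in> U n" using y(2) cA yA A2_mult by (auto simp: U_def in_S)
    qed
  qed
qed

lemma d3: assumes "\<not> p dvd n" shows "U n = S n"
proof -
  have "\<not> edvd \<pi> x" if x: "x \<in> S n" for x
  proof
    assume "edvd \<pi> x"
    then obtain z where z: "z \<in> A2" "x = \<pi>*z" by (auto simp: edvd_def)
    obtain j where j: "(cmod z)^2 = real j" using A2_norm_nat[OF z(1)] by blast
    have "real n = real (p * j)" using x z j by (simp add: in_S norm_mult_sq pnorm)
    hence "n = p * j" by (simp only: of_nat_eq_iff)
    thus False using assms by simp
  qed
  thus ?thesis by (auto simp: U_def)
qed

definition TU :: "nat \<Rightarrow> complex" where "TU n = (\<Sum>x\<in>U n. x^6)"

lemma T_rec: assumes "p dvd n" shows "T n = TU n + \<pi>^6 * T (n div p)"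
proof -
  have inj: "inj_on (\<lambda>y. \<pi>*y) A" for A using pi0 by (auto simp: inj_on_def)
  have "T n = TU n + (\<Sum>x\<in>(\<lambda>y. \<pi>*y) ` S (n div p). x^6)"
    unfolding T_def TU_def d1(1)[OF assms]
    by (rule sum.union_disjoint) (use finite_U finite_S d1(2)[OF assms] in auto)
  also have "(\<Sum>x\<in>(\<lambda>y. \<pi>*y) ` S (n div p). x^6) = \<pi>^6 * T (n div p)"
    by (simp add: sum.reindex[OF inj] T_def sum_distrib_left power_mult_distrib)
  finally show ?thesis .
qed

lemma TU_rec: assumes "p dvd n" shows "TU n = cnj \<pi>^6 * TU (n div p)"
proof -
  have inj: "inj_on (\<lambda>y. cnj \<pi>*y) A" for A using pi0 by (auto simp: inj_on_def)
  show ?thesis unfolding TU_def d2[OF assms]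
    by (simp add: sum.reindex[OF inj] sum_distrib_left power_mult_distrib)
qed

primrec G :: "nat \<Rightarrow> complex" where
  "G 0 = 1"
| "G (Suc e) = cnj \<pi> ^ (6 * Suc e) + \<pi>^6 * G e"

lemma main_rec:
  assumes "\<not> p dvd m"
  shows "TU (p^e * m) = cnj \<pi> ^ (6*e) * T m \<and> T (p^e * m) = G e * T m
         \<and> (S (p^e * m) \<noteq> {} \<longrightarrow> S m \<noteq> {})"
proof (induction e)
  case 0
  thus ?case using d3[OF assms] by (simp add: TU_def T_def)
next
  case (Suc e)
  have dv: "p dvd p^Suc e * m" by simp
  have dd: "p^Suc e * m div p = p^e * m" using p0 by simp
  have pw: "cnj \<pi> ^ (6 * Suc e) = cnj \<pi> ^ 6 * cnj \<pi> ^ (6 * e)"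
    by (simp add: power_add[symmetric])
  have 1: "TU (p^Suc e * m) = cnj \<pi> ^ (6 * Suc e) * T m"
    unfolding TU_rec[OF dv, unfolded dd] pw using Suc.IH by simp
  have 2: "T (p^Suc e * m) = G (Suc e) * T m"
    unfolding T_rec[OF dv, unfolded dd] 1 using Suc.IH by (simp add: algebra_simps)
  have 3: "S (p^Suc e * m) \<noteq> {} \<longrightarrow> S m \<noteq> {}"
  proof
    assume ne: "S (p^Suc e * m) \<noteq> {}"
    have "S (p^e * m) \<noteq> {}"
    proof (cases "U (p^Suc e * m) = {}")
      case True
      thus ?thesis using ne d1(1)[OF dv, unfolded dd] by auto
    next
      case False
      thus ?thesis using d2[OF dv, unfolded dd] by (auto simp: U_def)
    qed
    thus "S m \<noteq> {}" using Suc.IH by blast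
  qed
  show ?case using 1 2 3 by blast
qed

lemma G_id: "(cnj \<pi>^6 - \<pi>^6) * G e = cnj \<pi> ^ (6 * Suc e) - \<pi> ^ (6 * Suc e)"
proof -
  define a where "a = cnj \<pi>^6"
  define b where "b = \<pi>^6"
  have Gs: "G (Suc e) = a ^ Suc e + b * G e" for e
    unfolding a_def b_def power_mult[symmetric] by simp
  have "(a - b) * G e = a ^ Suc e - b ^ Suc e"
  proof (induction e)
    case (Suc e)
    have "(a - b) * G (Suc e) = (a - b) * a ^ Suc e + b * ((a - b) * G e)"
      unfolding Gs by (simp add: algebra_simps)
    also have "\<dots> = a ^ Suc (Suc e) - b ^ Suc (Suc e)" unfolding Suc.IH by (simp add: algebra_simps)
    finally show ?case .
  qed simp
  thus ?thesis unfolding a_def b_def power_mult[symmetric] .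
qed

lemma G_nz: "G e \<noteq> 0"
proof
  assume "G e = 0"
  hence eq: "cnj \<pi> ^ (6 * Suc e) = \<pi> ^ (6 * Suc e)" using G_id[of e] by simp
  have "\<pi> ^ (6 * Suc e) = \<pi> * \<pi> ^ (6 * e + 5)" by (simp add: power_Suc[symmetric])
  moreover have "\<pi> ^ (6 * e + 5) \<in> A2" using piA by (rule A2_pow)
  ultimately have "edvd \<pi> (cnj \<pi> ^ (6 * Suc e))" using eq by (auto simp: edvd_def)
  hence "edvd \<pi> (cnj \<pi>)" using edvd_pow A2_cnj[OF piA] by blast
  thus False using notcnj by simp
qed

end

lemma pow6: "(x::complex)^6 = x*(x*(x*(x*(x*x))))" by (simp add: eval_nat_numeral)

lemma S1_pow: assumes "x \<in> S 1" shows "x^6 = 1"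
proof -
  obtain a b where x: "x = eis a b" using assms by (auto simp: in_S in_A2)
  have "real_of_int (a^2 + a*b + b^2) = real_of_int 1" using assms norm_eis[of a b] x by (simp add: in_S)
  hence nn: "a^2 + a*b + b^2 = 1" by (simp only: of_int_eq_iff)
  define N where "N = a^2 + a*b + b^2"
  define P where "P = (2*a+b)^2"
  define Q where "Q = b^2"
  have h: "4*N = P + 3*Q" unfolding N_def P_def Q_def by algebra
  have P0: "P \<ge> 0" "Q \<ge> 0" unfolding P_def Q_def by simp_all
  have "\<bar>b\<bar> \<le> Q" "\<bar>2*a+b\<bar> \<le> P" unfolding P_def Q_def by (rule int_abs_le_sq)+
  hence "\<bar>b\<bar> \<le> 4" "\<bar>2*a+b\<bar> \<le> 4" using h P0 nn N_def by linarith+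
  hence "b \<in> {-4..4}" "a \<in> {-4..4}" by auto
  hence "b \<in> {-4,-3,-2,-1,0,1,2,3,4}" "a \<in> {-4,-3,-2,-1,0,1,2,3,4}" by (auto simp: atLeastAtMost_iff)
  with nn show ?thesis unfolding x pow6 by (auto simp: eis_mult eis_1[symmetric])
qed

lemma T1: assumes "S 1 \<noteq> {}" shows "T 1 \<noteq> 0"
proof -
  have "T 1 = (\<Sum>x\<in>S 1. 1)" unfolding T_def by (rule sum.cong) (auto simp: S1_pow)
  also have "\<dots> = of_nat (card (S 1))" by simp
  finally show ?thesis using assms finite_S[of 1] by (simp add: card_eq_0_iff)
qed

lemma decomp: "n > 0 \<Longrightarrow> (P::nat) > 1 \<Longrightarrow> \<exists>e m. n = P^e * m \<and> \<not> P dvd m"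
proof (induction n rule: less_induct)
  case (less n)
  show ?case
  proof (cases "P dvd n")
    case True
    then obtain n' where n': "n = P * n'" by blast
    hence "n' < n" "n' > 0" using less.prems by auto
    then obtain e m where "n' = P^e * m" "\<not> P dvd m" using less.IH less.prems by blast
    thus ?thesis using n' by (intro exI[of _ "Suc e"] exI[of _ m]) auto
  next
    case False
    thus ?thesis by (intro exI[of _ 0] exI[of _ n]) auto
  qed
qed

lemma S_int: assumes "eis a b \<in> S n" shows "a^2 + a*b + b^2 = int n"
proof -
  have "real_of_int (a^2 + a*b + b^2) = real_of_int (int n)" using assms norm_eis[of a b] by (simp add: in_S)
  thus ?thesis by (simp only: of_int_eq_iff)
qed

theorem T_nonzero: "n > 0 \<Longrightarrow> S n \<noteq> {} \<Longrightarrow> T n \<noteq> 0"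
proof (induction n rule: less_induct)
  case (less n)
  show ?case
  proof (cases "n = 1")
    case True thus ?thesis using T1 less.prems by simp
  next
    case False
    then obtain P where P: "prime P" "P dvd n" using less.prems
      by (metis prime_factor_nat)
    have P1: "P > 1" using P prime_gt_1_nat by blast
    show ?thesis
    proof (cases "P = 3")
      case True
      define l where "l = eis 1 1"
      have lA: "l \<in> A2" "l \<noteq> 0" "(cmod l)^2 = real 3" unfolding l_def using norm_eis[of 1 1]
        by (auto simp: eis_0[symmetric])
      have all: "\<forall>x\<in>S n. edvd l x"
      proof
        fix x assume x: "x \<in> S n"
        then obtain a b where ab: "x = eis a b" by (auto simp: in_S in_A2)
        have N: "a^2 + a*b + b^2 = int n" using S_int x ab by blast
        have "(3::int) dvd int n" using P True by (metis int_dvd_int_iff of_nat_numeral)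
        hence "3 dvd (a-b)^2 + 3*(a*b)" using N by (simp add: power2_eq_square algebra_simps)
        hence "3 dvd (a-b)^2" by (simp add: dvd_add_left_iff)
        moreover have "prime (3::int)" by simp
        ultimately have d3: "3 dvd a - b" using prime_dvd_power by blast
        then obtain k where k: "a - b = 3*k" by blast
        have "x = l * eis (a - k) (-k)" using k by (simp add: ab l_def eis_mult algebra_simps)
        thus "edvd l x" by (auto simp: edvd_def)
      qed
      have dv: "3 dvd n" using P True by simp
      note sc = scale[OF lA dv all]
      have ne: "S (n div 3) \<noteq> {}" using sc(1) less.prems by auto
      have "n div 3 < n" "n div 3 > 0" using less.prems dv by auto
      hence "T (n div 3) \<noteq> 0" using less.IH ne by blast
      thus ?thesis using sc(2) lA by simp
    next
      case P3: False
      show ?thesis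
      proof (cases "\<forall>x\<in>S n. edvd (of_nat P) x")
        case True
        obtain x0 where x0: "x0 \<in> S n" using less.prems by auto
        then obtain z where z: "z \<in> A2" "x0 = of_nat P * z" using True by (auto simp: edvd_def)
        obtain j where j: "(cmod z)^2 = real j" using A2_norm_nat[OF z(1)] by blast
        have "real n = real (P^2 * j)" using x0 z j by (simp add: in_S norm_mult power_mult_distrib)
        hence nj: "n = P^2 * j" by (simp only: of_nat_eq_iff)
        have cA: "of_nat P \<in> A2" "(of_nat P :: complex) \<noteq> 0" "(cmod (of_nat P))^2 = real (P^2)"
          using P1 A2_of_nat by auto
        have dv: "P^2 dvd n" using nj by simp
        note sc = scale[OF cA dv True]
        have ne: "S (n div P^2) \<noteq> {}" using sc(1) less.prems by auto
        have "P^2 > 1" using P1 by (intro one_less_power) auto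
        hence "n div P^2 < n" "n div P^2 > 0" using less.prems dv by (auto intro: div_less_dividend)
        hence "T (n div P^2) \<noteq> 0" using less.IH ne by blast
        thus ?thesis using sc(2) cA by simp
      next
        case False
        then obtain x0 where x0: "x0 \<in> S n" "\<not> edvd (of_nat P) x0" by blast
        then obtain a b where ab: "x0 = eis a b" by (auto simp: in_S in_A2)
        define p where "p = int P"
        have pp: "prime p" using P by (simp add: p_def)
        have p3: "p \<noteq> 3" using P3 by (simp add: p_def)
        have N: "a^2 + a*b + b^2 = int n" using S_int x0 ab by blast
        have pN: "p dvd a^2 + a*b + b^2" using N P by (simp add: p_def)
        have nab: "\<not> (p dvd a \<and> p dvd b)"
        proof
          assume "p dvd a \<and> p dvd b"
          then obtain a' b' where "a = p*a'" "b = p*b'" by (auto elim!: dvdE)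
          hence "x0 = of_nat P * eis a' b'" by (simp add: ab p_def eis_def algebra_simps)
          thus False using x0(2) by (auto simp: edvd_def)
        qed
        have nb: "\<not> p dvd b"
        proof
          assume pb: "p dvd b"
          have "a^2 = (a^2 + a*b + b^2) - (a*b + b*b)" by (simp add: power2_eq_square)
          moreover have "p dvd (a^2 + a*b + b^2) - (a*b + b*b)" using pb by (intro dvd_diff[OF pN] dvd_add) auto
          ultimately have "p dvd a^2" by simp
          hence "p dvd a" using pp prime_dvd_power by blast
          thus False using nab pb by blast
        qed
        have "coprime p b" using pp nb by (simp add: prime_imp_coprime)
        then obtain uu vv where uv: "uu * b + vv * p = 1" using bezout_int[of b p]
          by (metis coprime_iff_gcd_eq_1 gcd.commute)
        define sr where "sr = -a * uu"
        define kk where "kk = a * vv"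
        have ub: "uu * b = 1 - vv * p" using uv by (simp add: eq_diff_eq)
        have "b * sr = -a * (uu * b)" by (simp add: sr_def algebra_simps)
        also have "\<dots> = p*kk - a" unfolding ub by (simp add: kk_def algebra_simps)
        finally have y: "b * sr = p*kk - a" .
        have "b^2 * (sr^2 - sr + 1) = (b * sr)^2 - b*(b * sr) + b^2" by (simp add: power2_eq_square algebra_simps)
        also have "\<dots> = (a^2 + a*b + b^2) + p*(p*kk^2 - 2*a*kk - b*kk)" unfolding y
          by (simp add: power2_eq_square algebra_simps)
        finally have "p dvd b^2 * (sr^2 - sr + 1)" using pN by (metis dvd_add dvd_triv_left)
        moreover have "\<not> p dvd b^2" using nb pp prime_dvd_power by blast
        ultimately have psr: "p dvd sr^2 - sr + 1" using pp by (simp add: prime_dvd_mult_iff)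
        interpret sp: splitp p sr using pp p3 psr by unfold_locales
        obtain \<pi> where pi: "sp.inK \<pi>" "\<pi> \<noteq> 0" "\<forall>z\<in>A2. edvd \<pi> z \<longleftrightarrow> sp.inK z"
          using sp.exists_pi by blast
        have pin: "(cmod \<pi>)^2 = real P" using sp.norm_pi[OF pi] by (simp add: p_def)
        have nc: "\<not> sp.inK (cnj \<pi>)" using sp.cnj_pi_notK[OF pi(1)] sp.norm_pi[OF pi] by blast
        have piA: "\<pi> \<in> A2" using sp.inK_A2 pi(1) .
        interpret pr: piprime \<pi> P
        proof
          show "\<pi> \<in> A2" "(cmod \<pi>)^2 = real P" "prime P" using piA pin P by auto
          show "edvd \<pi> x \<or> edvd \<pi> y" if "x \<in> A2" "y \<in> A2" "edvd \<pi> (x*y)" for x y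
            using that pi(3) sp.inK_mult A2_mult by metis
          show "\<not> edvd \<pi> (cnj \<pi>)" using pi(3) A2_cnj[OF piA] nc by blast
        qed
        obtain e m where em: "n = P^e * m" "\<not> P dvd m" using decomp less.prems P1 by blast
        have e0: "e > 0" using em P by (cases e) auto
        have m0: "m > 0" using em less.prems by (cases m) auto
        have "P^e > 1" using e0 P1 by (intro one_less_power) auto
        hence mn: "m < n" using em m0 by simp
        note mr = pr.main_rec[OF em(2), of e]
        have "S m \<noteq> {}" using mr em less.prems by simp
        hence "T m \<noteq> 0" using less.IH mn m0 by blast
        thus ?thesis using mr em pr.G_nz by simp
      qed
    qed
  qed
qed

lemma poly2I:
  assumes D: "D \<subseteq> {(i, j). i + j \<le> t}" and f: "\<And>x y. f x y = (\<Sum>(i,j)\<in>D. c i j * x^i * y^j)"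
  shows "poly2_deg_le t f"
proof -
  define c' where "c' i j = (if (i,j) \<in> D then c i j else 0)" for i j
  have fin: "finite {(i, j). i + j \<le> (t::nat)}"
    by (rule finite_subset[of _ "{0..t} \<times> {0..t}"]) auto
  have "f x y = (\<Sum>(i,j)\<in>{(i, j). i + j \<le> t}. c' i j * x^i * y^j)" for x y
  proof -
    have "(\<Sum>(i,j)\<in>{(i, j). i + j \<le> t}. c' i j * x^i * y^j) = (\<Sum>(i,j)\<in>D. c' i j * x^i * y^j)"
      by (rule sum.mono_neutral_right[OF fin D]) (auto simp: c'_def)
    also have "\<dots> = (\<Sum>(i,j)\<in>D. c i j * x^i * y^j)"
      by (rule sum.cong) (auto simp: c'_def)
    finally show ?thesis using f by simp
  qed
  thus ?thesis unfolding poly2_deg_le_def by blast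
qed

lemma cmult: "Complex a b * Complex c d = Complex (a*c - b*d) (a*d + b*c)"
  by (simp add: complex_eq_iff)

lemma re6: "Re ((Complex x y)^6) = x^6 - 15*x^4*y^2 + 15*x^2*y^4 - y^6"
  unfolding pow6 cmult complex.sel by (simp add: eval_nat_numeral algebra_simps)

lemma im6: "Im ((Complex x y)^6) = 6*x^5*y - 20*x^3*y^3 + 6*x*y^5"
  unfolding pow6 cmult complex.sel by (simp add: eval_nat_numeral algebra_simps)

lemma poly_re: "poly2_deg_le 6 (\<lambda>x y. Re ((Complex x y)^6))"
proof (rule poly2I[where D = "{(6,0),(4,2),(2,4),(0,6)}" and
      c = "\<lambda>i j. if (i,j) = (6,0) then 1 else if (i,j) = (4,2) then -15 else if (i,j) = (2,4) then 15 else -1"])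
  fix x y :: real
  show "Re ((Complex x y)^6) = (\<Sum>(i,j)\<in>{(6,0),(4,2),(2,4),(0,6)}. (if (i,j) = (6,0) then 1 else if (i,j) = (4,2) then -15 else if (i,j) = (2,4) then 15 else -1) * x^i * y^j)"
    by (simp add: re6)
qed auto

lemma poly_im: "poly2_deg_le 6 (\<lambda>x y. Im ((Complex x y)^6))"
proof (rule poly2I[where D = "{(5,1),(3,3),(1,5)}" and
      c = "\<lambda>i j. if (i,j) = (3,3) then -20 else 6"])
  fix x y :: real
  show "Im ((Complex x y)^6) = (\<Sum>(i,j)\<in>{(5,1),(3,3),(1,5)}. (if (i,j) = (3,3) then -20 else 6) * x^i * y^j)"
    by (simp add: im6)
qed auto

lemma cis6: "(Complex (cos t) (sin t))^6 = cis (6*t)"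
proof -
  have "Complex (cos t) (sin t) = cis t" by (simp add: complex_eq_iff)
  thus ?thesis using Complex.DeMoivre[of t 6] by simp
qed

lemma int_re: "integral {0..2*pi} (\<lambda>t. Re ((Complex (cos t) (sin t))^6)) = 0"
proof -
  have "((\<lambda>t. cos (6*t)) has_integral (sin (6*(2*pi))/6 - sin (6*0)/6)) {0..2*pi}"
  proof (rule fundamental_theorem_of_calculus)
    show "0 \<le> 2*pi" by simp
    fix t assume "t \<in> {0..2*pi}"
    have "((\<lambda>t. sin (6*t)/6) has_real_derivative cos (6*t)) (at t within {0..2*pi})"
      by (rule derivative_eq_intros refl | simp)+
    thus "((\<lambda>t. sin (6*t)/6) has_vector_derivative cos (6*t)) (at t within {0..2*pi})"
      by (simp add: has_real_derivative_iff_has_vector_derivative)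
  qed
  moreover have "sin (6*(2*pi)) = 0"
    using sin_npi[of 12] by (simp add: mult.assoc[symmetric])
  ultimately have "((\<lambda>t. cos (6*t)) has_integral 0) {0..2*pi}" by simp
  thus ?thesis by (simp add: cis6 integral_unique)
qed

lemma int_im: "integral {0..2*pi} (\<lambda>t. Im ((Complex (cos t) (sin t))^6)) = 0"
proof -
  have "((\<lambda>t. sin (6*t)) has_integral (-cos (6*(2*pi))/6 - (-cos (6*0)/6))) {0..2*pi}"
  proof (rule fundamental_theorem_of_calculus)
    show "0 \<le> 2*pi" by simp
    fix t assume "t \<in> {0..2*pi}"
    have "((\<lambda>t. -cos (6*t)/6) has_real_derivative sin (6*t)) (at t within {0..2*pi})"
      by (rule derivative_eq_intros refl | simp)+
    thus "((\<lambda>t. -cos (6*t)/6) has_vector_derivative sin (6*t)) (at t within {0..2*pi})"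
      by (simp add: has_real_derivative_iff_has_vector_derivative)
  qed
  moreover have "cos (6*(2*pi)) = 1"
  proof -
    have "6*(2*pi) = 2 * real (6::nat) * pi" by simp
    thus ?thesis using cos_2npi[of 6] by simp
  qed
  ultimately have "((\<lambda>t. sin (6*t)) has_integral 0) {0..2*pi}" by simp
  thus ?thesis by (simp add: cis6 integral_unique)
qed

theorem theorem1p2:
  fixes m :: real
  assumes "m > 0" and "A2_shell m \<noteq> {}"
  shows "\<not> circle_design_r (sqrt m) 6 (A2_shell m)"
proof
  assume des: "circle_design_r (sqrt m) 6 (A2_shell m)"
  obtain x0 where x0: "x0 \<in> A2_shell m" using assms(2) by blast
  then obtain n where n: "m = real n" using A2_norm_nat[of x0] by (auto simp: A2_shell_def)
  have n0: "n > 0" using assms(1) n by simp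
  have Sn: "A2_shell m = S n" by (simp add: S_def n)
  have ne: "S n \<noteq> {}" using assms(2) Sn by simp
  have Tn: "T n \<noteq> 0" using T_nonzero[OF n0 ne] .
  define r where "r = sqrt m"
  have r0: "r > 0" using assms(1) by (simp add: r_def)
  define X where "X = (\<lambda>x. x / complex_of_real r) ` S n"
  have cd: "circle_design 6 X" using des by (simp add: circle_design_r_def X_def Sn r_def)
  have finX: "finite X" and neX: "X \<noteq> {}" using cd by (auto simp: circle_design_def)
  have cX: "real (card X) \<noteq> 0" using finX neX by simp
  have "(\<Sum>x\<in>X. Re ((Complex (Re x) (Im x))^6)) / real (card X) = 0"
    using cd poly_re int_re unfolding circle_design_def by auto
  hence sre: "(\<Sum>x\<in>X. Re (x^6)) = 0" using cX by simp
  have "(\<Sum>x\<in>X. Im ((Complex (Re x) (Im x))^6)) / real (card X) = 0"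
    using cd poly_im int_im unfolding circle_design_def by auto
  hence sim: "(\<Sum>x\<in>X. Im (x^6)) = 0" using cX by simp
  have sX: "(\<Sum>x\<in>X. x^6) = 0" using sre sim by (simp add: complex_eq_iff Re_sum Im_sum)
  have inj: "inj_on (\<lambda>x. x / complex_of_real r) (S n)" using r0 by (auto simp: inj_on_def)
  have "(\<Sum>x\<in>X. x^6) = (\<Sum>x\<in>S n. (x / complex_of_real r)^6)"
    unfolding X_def by (simp add: sum.reindex[OF inj])
  also have "\<dots> = T n / complex_of_real r ^ 6"
    by (simp add: T_def power_divide sum_divide_distrib)
  finally have "T n = 0" using sX r0 by simp
  thus False using Tn by simp
qed

end
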